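(* Let $f=\frac1n\sum_{i=1}^n f_i$ where each $f_i:\mathbb{R}^d\to\mathbb{R}$ is differentiable, bounded from below by $f_i^{\mathrm{inf}}$, and $L_i$-smooth in the sense that $f_i(y)\le f_i(x)+\langle\nabla f_i(x),y-x\rangle+\frac{L_i}{2}\|y-x\|^2$ for all $x,y$. Let $f^{\mathrm{inf}}=\inf_x f(x)$ and $\Delta^{\mathrm{inf}}=\frac1n\sum_{i=1}^n (f^{\mathrm{inf}}-f_i^{\mathrm{inf}})$. Let $v=(v_1,\dots,v_n)$ be a random vector with $\mathbb{E}[v_i]=1$ and $\mathbb{E}[v_i^2]<\infty$ for all $i$, and define $g(x)=\frac1n\sum_{i=1}^n v_i\nabla f_i(x)$. Then $\Delta^{\mathrm{inf}}\ge 0$ and for all $x\in\mathbb{R}^d$, $$\mathbb{E}\|g(x)\|^2\le 2A\,(f(x)-f^{\mathrm{inf}})+B\|\nabla f(x)\|^2+C$$ with $A=\max_i L_i\mathbb{E}[v_i^2]$, $B=0$, $C=2A\Delta^{\mathrm{inf}}$. *)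

theory Defs
  imports "HOL-Probability.Probability"
begin

definition grad :: "('a::euclidean_space \<Rightarrow> real) \<Rightarrow> 'a \<Rightarrow> 'a" where
  "grad f x = (THE G. (f has_derivative (\<lambda>h. G \<bullet> h)) (at x))"

end

theory Submission
  imports Defs
begin

lemma quad_false:
  fixes s a c m :: real
  assumes "s > 0" "\<And>t. m \<le> a + c*t - s*t^2"
  shows False
proof -
  define t where "t = max 1 ((\<bar>c\<bar>+\<bar>a-m\<bar>+1)/s)"
  have t1: "t \<ge> 1" and t2: "s*t \<ge> \<bar>c\<bar>+\<bar>a-m\<bar>+1"
    using assms(1) by (auto simp: t_def field_simps max_def)
  have "s*t^2 = (s*t)*t" by (simp add: power2_eq_square)
  also have "\<dots> \<ge> (\<bar>c\<bar>+\<bar>a-m\<bar>+1)*t" using t1 t2 by (intro mult_right_mono) auto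
  finally have "s*t^2 \<ge> (\<bar>c\<bar>+\<bar>a-m\<bar>+1)*t" .
  moreover have "(\<bar>c\<bar>+\<bar>a-m\<bar>+1)*t \<ge> \<bar>c\<bar>*t + \<bar>a-m\<bar> + 1" using t1
    by (simp add: algebra_simps) (smt (verit) mult_left_mono abs_ge_zero mult.commute mult_cancel_left1 t1)
  moreover have "c*t \<le> \<bar>c\<bar>*t" using t1 by (simp add: mult_right_mono)
  ultimately show False using assms(2)[of t] by (smt (verit))
qed

lemma grad_helper:
  fixes F :: "'a::euclidean_space \<Rightarrow> real" and Gr :: "'a \<Rightarrow> 'a"
  assumes lb: "\<And>y. m \<le> F y"
    and sm: "\<And>u w. F w \<le> F u + Gr u \<bullet> (w - u) + L/2 * (norm (w-u))\<^sup>2"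
  shows "0 \<le> L" "(norm (Gr x))\<^sup>2 \<le> 2*L*(F x - m)"
proof -
  show L0: "0 \<le> L"
  proof (rule ccontr)
    assume "\<not> 0 \<le> L"
    obtain b :: 'a where b: "b \<in> Basis" using nonempty_Basis by blast
    have "m \<le> F x + (Gr x \<bullet> b)*t - (-L/2)*t^2" for t
    proof -
      have "m \<le> F (x + t *\<^sub>R b)" by (rule lb)
      also have "\<dots> \<le> F x + Gr x \<bullet> (t *\<^sub>R b) + L/2 * (norm (t *\<^sub>R b))\<^sup>2"
        using sm[where u=x and w="x + t *\<^sub>R b"] by simp
      also have "\<dots> = F x + (Gr x \<bullet> b)*t - (-L/2)*t^2"
        using b by (simp add: power_mult_distrib)
      finally show ?thesis .
    qed
    then show False using quad_false[of "-L/2"] \<open>\<not> 0 \<le> L\<close> by force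
  qed
  define N where "N = (norm (Gr x))\<^sup>2"
  have step: "m \<le> F x - t*N + L/2*t^2*N" for t
  proof -
    have "m \<le> F (x - t *\<^sub>R Gr x)" by (rule lb)
    also have "\<dots> \<le> F x + Gr x \<bullet> (- (t *\<^sub>R Gr x)) + L/2 * (norm (t *\<^sub>R Gr x))\<^sup>2"
      using sm[where u=x and w="x - t *\<^sub>R Gr x"] by simp
    also have "\<dots> = F x - t*N + L/2*t^2*N"
      by (simp add: N_def power_mult_distrib inner_commute power2_norm_eq_inner)
    finally show ?thesis .
  qed
  show "(norm (Gr x))\<^sup>2 \<le> 2*L*(F x - m)"
  proof (cases "L = 0")
    case True
    have "N \<le> 0"
    proof (rule ccontr)
      assume "\<not> N \<le> 0"
      then have "N > 0" by simp
      have "m \<le> F x - ((F x - m + 1)/N)*N" using step[of "(F x - m + 1)/N"] True by simp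
      then show False using \<open>N>0\<close> by simp
    qed
    then show ?thesis using True N_def by simp
  next
    case False
    then have "L > 0" using L0 by simp
    have "m \<le> F x - (1/L)*N + L/2*(1/L)^2*N" by (rule step)
    also have "\<dots> = F x - N/(2*L)" using \<open>L>0\<close> by (simp add: field_simps power2_eq_square)
    finally have "N/(2*L) \<le> F x - m" by simp
    then show ?thesis using \<open>L>0\<close> by (simp add: N_def field_simps)
  qed
qed

theorem proposition2:
  fixes n :: nat
    and fs :: "nat \<Rightarrow> 'a::euclidean_space \<Rightarrow> real"
    and L :: "nat \<Rightarrow> real"
    and M :: "'w measure"
    and v :: "'w \<Rightarrow> nat \<Rightarrow> real"
  assumes n_pos: "n \<ge> 1"
    and diff: "\<And>i x. i < n \<Longrightarrow> fs i differentiable (at x)"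
    and bdd: "\<And>i. i < n \<Longrightarrow> bdd_below (range (fs i))"
    and smooth: "\<And>i x y. i < n \<Longrightarrow>
        fs i y \<le> fs i x + grad (fs i) x \<bullet> (y - x) + L i / 2 * (norm (y - x))\<^sup>2"
    and prob: "prob_space M"
    and meas: "\<And>i. i < n \<Longrightarrow> (\<lambda>\<omega>. v \<omega> i) \<in> borel_measurable M"
    and int1: "\<And>i. i < n \<Longrightarrow> integrable M (\<lambda>\<omega>. v \<omega> i)"
    and mean1: "\<And>i. i < n \<Longrightarrow> prob_space.expectation M (\<lambda>\<omega>. v \<omega> i) = 1"
    and sq_int: "\<And>i. i < n \<Longrightarrow> integrable M (\<lambda>\<omega>. (v \<omega> i)\<^sup>2)"
  defines "f \<equiv> (\<lambda>x. (1 / real n) * (\<Sum>i<n. fs i x))"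
    and "finf \<equiv> Inf (range (\<lambda>x. (1 / real n) * (\<Sum>i<n. fs i x)))"
    and "Delta \<equiv> (1 / real n) * (\<Sum>i<n. Inf (range (\<lambda>x. (1 / real n) * (\<Sum>i<n. fs i x))) - Inf (range (fs i)))"
    and "g \<equiv> (\<lambda>\<omega> x. (1 / real n) *\<^sub>R (\<Sum>i<n. v \<omega> i *\<^sub>R grad (fs i) x))"
    and "A \<equiv> Max ((\<lambda>i. L i * prob_space.expectation M (\<lambda>\<omega>. (v \<omega> i)\<^sup>2)) ` {..<n})"
    and "B \<equiv> (0::real)"
    and "C \<equiv> 2 * Max ((\<lambda>i. L i * prob_space.expectation M (\<lambda>\<omega>. (v \<omega> i)\<^sup>2)) ` {..<n}) * ((1 / real n) * (\<Sum>i<n. Inf (range (\<lambda>x. (1 / real n) * (\<Sum>i<n. fs i x))) - Inf (range (fs i))))"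
  shows "Delta \<ge> 0 \<and>
    (\<forall>x. prob_space.expectation M (\<lambda>\<omega>. (norm (g \<omega> x))\<^sup>2)
           \<le> 2 * A * (f x - finf) + B * (norm (grad f x))\<^sup>2 + C)"
  proof -
  interpret P: prob_space M by (rule prob)
  define m where "m i = Inf (range (fs i))" for i
  have lb: "m i \<le> fs i y" if "i < n" for i y
    unfolding m_def using bdd[OF that] by (rule cInf_lower[OF rangeI])
  have L0: "0 \<le> L i" if "i < n" for i
    using grad_helper(1)[of "m i" "fs i" "grad (fs i)" "L i"] lb[OF that] smooth[OF that] by blast
  have Gb: "(norm (grad (fs i) x))\<^sup>2 \<le> 2 * L i * (fs i x - m i)" if "i < n" for i x
    using grad_helper(2)[of "m i" "fs i" "grad (fs i)" "L i"] lb[OF that] smooth[OF that] by blast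
  have npos: "real n > 0" using n_pos by simp
  define mm where "mm = (1 / real n) * (\<Sum>i<n. m i)"
  have flb: "mm \<le> f y" for y
    unfolding mm_def f_def using npos
    by (intro mult_left_mono sum_mono lb) auto
  have finf_eq: "finf = Inf (range f)" unfolding finf_def f_def by simp
  have finf_ge: "mm \<le> finf" unfolding finf_eq by (rule cINF_greatest) (use flb in auto)
  have finf_le: "finf \<le> f y" for y unfolding finf_eq
    by (rule cInf_lower) (use flb in \<open>auto simp: bdd_below_def\<close>)
  have Delta_eq: "Delta = finf - mm"
  proof -
    have "Delta = (1 / real n) * (\<Sum>i<n. finf - m i)"
      unfolding Delta_def finf_def m_def by simp
    also have "\<dots> = (1 / real n) * (real n * finf - (\<Sum>i<n. m i))"
      by (simp add: sum_subtractf)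
    also have "\<dots> = finf - mm" unfolding mm_def using npos by (simp add: field_simps)
    finally show ?thesis .
  qed
  have C_eq: "C = 2 * A * Delta" unfolding C_def A_def Delta_def by simp
  define e where "e i = P.expectation (\<lambda>\<omega>. (v \<omega> i)\<^sup>2)" for i
  have e0: "0 \<le> e i" for i unfolding e_def by (rule integral_nonneg_AE) auto
  have LeA: "L i * e i \<le> A" if "i < n" for i
    unfolding A_def e_def using that by (intro Max_ge) auto
  have main: "P.expectation (\<lambda>\<omega>. (norm (g \<omega> x))\<^sup>2) \<le> 2 * A * (f x - finf) + C" for x
  proof -
    define G where "G i = grad (fs i) x" for i
    have pw: "(norm (g \<omega> x))\<^sup>2 \<le> (1 / real n) * (\<Sum>i<n. (v \<omega> i)\<^sup>2 * (norm (G i))\<^sup>2)" for \<omega>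
    proof -
      have "(norm (g \<omega> x))\<^sup>2 = (1 / real n)^2 * (norm (\<Sum>i<n. v \<omega> i *\<^sub>R G i))\<^sup>2"
        unfolding g_def G_def using npos by (simp add: power_divide field_simps)
      also have "\<dots> \<le> (1 / real n)^2 * (\<Sum>i<n. norm (v \<omega> i *\<^sub>R G i))\<^sup>2"
        by (intro mult_left_mono power_mono norm_sum) auto
      also have "\<dots> \<le> (1 / real n)^2 * ((\<Sum>i<n. (norm (v \<omega> i *\<^sub>R G i))\<^sup>2) * real n)"
        using sum_squared_le_sum_of_squares[of "\<lambda>i. norm (v \<omega> i *\<^sub>R G i)" "{..<n}"]
        by (intro mult_left_mono) auto
      also have "\<dots> = (1 / real n) * (\<Sum>i<n. (v \<omega> i)\<^sup>2 * (norm (G i))\<^sup>2)"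
      proof -
        have "(\<Sum>i<n. (norm (v \<omega> i *\<^sub>R G i))\<^sup>2) = (\<Sum>i<n. (v \<omega> i)\<^sup>2 * (norm (G i))\<^sup>2)"
          by (simp add: power_mult_distrib)
        then show ?thesis using npos by (simp add: power2_eq_square)
      qed
      finally show ?thesis .
    qed
    have intR: "integrable M (\<lambda>\<omega>. (1 / real n) * (\<Sum>i<n. (v \<omega> i)\<^sup>2 * (norm (G i))\<^sup>2))"
      using sq_int by (intro integrable_mult_right integrable_sum integrable_mult_left) auto
    have "P.expectation (\<lambda>\<omega>. (norm (g \<omega> x))\<^sup>2)
        \<le> P.expectation (\<lambda>\<omega>. (1 / real n) * (\<Sum>i<n. (v \<omega> i)\<^sup>2 * (norm (G i))\<^sup>2))"
      by (rule integral_mono'[OF intR pw]) (auto intro!: sum_nonneg divide_nonneg_nonneg)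
    also have "\<dots> = (1 / real n) * (\<Sum>i<n. e i * (norm (G i))\<^sup>2)"
      unfolding e_def using sq_int by (simp add: integral_sum)
    also have "\<dots> \<le> (1 / real n) * (\<Sum>i<n. 2 * A * (fs i x - m i))"
    proof (intro mult_left_mono sum_mono)
      fix i assume "i \<in> {..<n}"
      then have i: "i < n" by simp
      have "e i * (norm (G i))\<^sup>2 \<le> e i * (2 * L i * (fs i x - m i))"
        using Gb[OF i] e0 unfolding G_def by (intro mult_left_mono) auto
      also have "\<dots> = 2 * (L i * e i) * (fs i x - m i)" by simp
      also have "\<dots> \<le> 2 * A * (fs i x - m i)"
        using LeA[OF i] lb[OF i] by (intro mult_right_mono) auto
      finally show "e i * (norm (G i))\<^sup>2 \<le> 2 * A * (fs i x - m i)" .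
    qed (use npos in auto)
    also have "\<dots> = 2 * A * (f x - mm)"
      unfolding f_def mm_def by (simp add: sum_subtractf sum_distrib_left[symmetric] sum_distrib_right[symmetric] algebra_simps)
    also have "\<dots> = 2 * A * (f x - finf) + C"
      unfolding C_eq Delta_eq by (simp add: algebra_simps)
    finally show ?thesis .
  qed
  show ?thesis using main finf_ge Delta_eq unfolding B_def by simp
qed

end
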